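(* Let $\Lambda$ be a countable index set, $\overline{a},\overline{r}$ sequences of positive reals indexed by $\Lambda$, $t\in(0,2)$, $x^+\in k_t$ and $\alpha>0$. Let $\Lambda_\alpha=\{j\in\Lambda:\overline{a}_j^{-2}\overline{r}_j\alpha<|x^+_j|\}$ and let $P_\alpha:\mathbb{R}^\Lambda\to\mathbb{R}^\Lambda$ be the coordinate projection $(P_\alpha x)_j=x_j$ for $j\in\Lambda_\alpha$ and $(P_\alpha x)_j=0$ otherwise. Then \[\|P_\alpha x\|_{\overline{r},1}\le\|x^+\|_{k_t}^{t/2}\,\alpha^{-t/2}\,\|x\|_{\overline{a},2}\quad\text{for all } x\in\ell^1_{\overline{a}}.\]
   Context: For a sequence $\omega$ of positive reals and $p\in(0,\infty)$, $\|x\|_{\omega,p}=\left(\sum_{j\in\Lambda}\omega_j^p|x_j|^p\right)^{1/p}$ and $\ell^p_\omega=\{x\in\mathbb{R}^\Lambda:\|x\|_{\omega,p}<\infty\}$. For $t\in(0,2)$, $k_t=\{x\in\mathbb{R}^\Lambda:\|x\|_{k_t}<\infty\}$ with $\|x\|_{k_t}=\sup_{\alpha>0}\alpha\left(\sum_{j\in\Lambda}\overline{a}_j^{-2}\overline{r}_j^2\mathbf{1}_{\{\overline{a}_j^{-2}\overline{r}_j\alpha<|x_j|\}}\right)^{1/t}$. *)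

theory Defs
  imports "HOL-Analysis.Analysis"
begin

definition epowr :: "ennreal \<Rightarrow> real \<Rightarrow> ennreal" where
  "epowr s q = (if s = \<infinity> then \<infinity> else ennreal (enn2real s powr q))"

definition wnorm :: "'i set \<Rightarrow> ('i \<Rightarrow> real) \<Rightarrow> real \<Rightarrow> ('i \<Rightarrow> real) \<Rightarrow> ennreal" where
  "wnorm \<Lambda> \<omega> p x = epowr (\<Sum>\<^sub>\<infinity>j\<in>\<Lambda>. ennreal (\<omega> j powr p * \<bar>x j\<bar> powr p)) (1 / p)"

definition ktnorm :: "'i set \<Rightarrow> ('i \<Rightarrow> real) \<Rightarrow> ('i \<Rightarrow> real) \<Rightarrow> real \<Rightarrow> ('i \<Rightarrow> real) \<Rightarrow> ennreal" where
  "ktnorm \<Lambda> a r t x = (SUP \<alpha>\<in>{0<..}. ennreal \<alpha> *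
      epowr (\<Sum>\<^sub>\<infinity>j\<in>\<Lambda>. ennreal (a j powr (-2) * (r j)\<^sup>2 *
                (if a j powr (-2) * r j * \<alpha> < \<bar>x j\<bar> then 1 else 0))) (1 / t))"

definition Lam_alpha :: "'i set \<Rightarrow> ('i \<Rightarrow> real) \<Rightarrow> ('i \<Rightarrow> real) \<Rightarrow> ('i \<Rightarrow> real) \<Rightarrow> real \<Rightarrow> 'i set" where
  "Lam_alpha \<Lambda> a r xp \<alpha> = {j\<in>\<Lambda>. a j powr (-2) * r j * \<alpha> < \<bar>xp j\<bar>}"

definition proj :: "'i set \<Rightarrow> ('i \<Rightarrow> real) \<Rightarrow> ('i \<Rightarrow> real)" where
  "proj S x = (\<lambda>j. if j \<in> S then x j else 0)"

end

theory Submission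
  imports Defs
begin

lemma ennreal_infsum_SUP:
  fixes f :: "'a \<Rightarrow> ennreal"
  shows "infsum f A = (SUP F\<in>{F. finite F \<and> F\<subseteq>A}. sum f F)"
  by (rule nonneg_infsum_complete) simp

lemma ennreal_sum_le_infsum:
  fixes f :: "'a \<Rightarrow> real"
  assumes "finite F" "F \<subseteq> A" "\<And>j. j \<in> A \<Longrightarrow> f j \<ge> 0"
  shows "ennreal (sum f F) \<le> (\<Sum>\<^sub>\<infinity>j\<in>A. ennreal (f j))"
proof -
  have "ennreal (sum f F) = (\<Sum>j\<in>F. ennreal (f j))"
    using assms by (subst sum_ennreal[symmetric]) auto
  also have "\<dots> \<le> (\<Sum>\<^sub>\<infinity>j\<in>A. ennreal (f j))"
    unfolding ennreal_infsum_SUP using assms by (intro SUP_upper) auto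
  finally show ?thesis .
qed

lemma abs_powr2: "\<bar>y::real\<bar> powr 2 = y^2"
  by (cases "y = 0") (auto simp: powr_numeral)

theorem lemma4p1:
  fixes \<Lambda> :: "'i set" and a r xp x :: "'i \<Rightarrow> real" and t \<alpha> :: real
  assumes "countable \<Lambda>"
    and "\<And>j. j \<in> \<Lambda> \<Longrightarrow> a j > 0"
    and "\<And>j. j \<in> \<Lambda> \<Longrightarrow> r j > 0"
    and "0 < t" and "t < 2"
    and "ktnorm \<Lambda> a r t xp < \<infinity>"
    and "\<alpha> > 0"
    and "wnorm \<Lambda> a 1 x < \<infinity>"
  shows "wnorm \<Lambda> r 1 (proj (Lam_alpha \<Lambda> a r xp \<alpha>) x)
           \<le> epowr (ktnorm \<Lambda> a r t xp) (t / 2) * ennreal (\<alpha> powr (- t / 2)) * wnorm \<Lambda> a 2 x"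
proof -
  note apos = assms(2) and rpos = assms(3)
  define S where "S = Lam_alpha \<Lambda> a r xp \<alpha>"
  define I where "I j = (if a j powr (-2) * r j * \<alpha> < \<bar>xp j\<bar> then 1 else (0::real))" for j
  define nt where "nt j = a j powr (-2) * (r j)\<^sup>2 * I j" for j
  define N where "N = (\<Sum>\<^sub>\<infinity>j\<in>\<Lambda>. ennreal (nt j))"
  define X where "X = (\<Sum>\<^sub>\<infinity>j\<in>\<Lambda>. ennreal (a j powr 2 * \<bar>x j\<bar> powr 2))"
  define L where "L = (\<Sum>\<^sub>\<infinity>j\<in>\<Lambda>. ennreal (r j powr 1 * \<bar>proj S x j\<bar> powr 1))"
  define K where "K = ktnorm \<Lambda> a r t xp"
  have LHS: "wnorm \<Lambda> r 1 (proj S x) = epowr L 1" unfolding wnorm_def L_def by simp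
  have RHS: "wnorm \<Lambda> a 2 x = epowr X (1/2)" unfolding wnorm_def X_def by simp
  have ntnn: "nt j \<ge> 0" for j unfolding nt_def I_def by auto
  have inS: "j \<in> S \<longleftrightarrow> I j = 1" if "j \<in> \<Lambda>" for j
    using that unfolding S_def Lam_alpha_def I_def by auto
  have hK: "ennreal \<alpha> * epowr N (1/t) \<le> K"
    unfolding K_def ktnorm_def N_def nt_def I_def using assms(7)
    by (intro SUP_upper) auto
  have Kfin: "K < \<infinity>" using assms(6) K_def by simp
  show ?thesis
  proof (cases "N = 0")
    case True
    have nt0: "nt j = 0" if "j \<in> \<Lambda>" for j
    proof -
      have "ennreal (sum nt {j}) \<le> N" unfolding N_def
        using that ntnn by (intro ennreal_sum_le_infsum) auto
      then show ?thesis using True ntnn[of j] by simp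
    qed
    have "j \<notin> S" if "j \<in> \<Lambda>" for j
      using inS[OF that] apos[OF that] rpos[OF that] nt0[OF that] unfolding nt_def by auto
    then have "L = 0" unfolding L_def proj_def
      by (subst infsum_0) auto
    then show ?thesis using LHS unfolding S_def epowr_def by simp
  next
    case False
    have Nfin: "N \<noteq> \<infinity>"
    proof
      assume "N = \<infinity>"
      then have "ennreal \<alpha> * epowr N (1/t) = \<infinity>"
        using assms(7) by (simp add: epowr_def ennreal_mult_top)
      then show False using hK Kfin by simp
    qed
    define n where "n = enn2real N"
    have Nn: "N = ennreal n" using Nfin n_def by (cases N) auto
    have npos: "n > 0" using False Nn n_def enn2real_nonneg
      by (metis ennreal_0 less_eq_real_def)
    define k where "k = enn2real K"
    have Kk: "K = ennreal k" using Kfin k_def by (cases K) auto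
    have knn: "k \<ge> 0" using k_def by simp
    have "ennreal (\<alpha> * n powr (1/t)) \<le> ennreal k"
      using hK Nfin unfolding Kk Nn epowr_def using assms(7) npos
      by (simp add: ennreal_mult)
    then have akn: "\<alpha> * n powr (1/t) \<le> k" using knn by (simp add: ennreal_le_iff)
    have kpos: "k > 0" using akn npos assms(7)
      by (smt (verit) mult_pos_pos powr_gt_zero)
    have EK: "epowr K (t/2) = ennreal (k powr (t/2))"
      using Kfin unfolding epowr_def k_def by simp
    show ?thesis
    proof (cases "X = \<infinity>")
      case True
      have "epowr K (t/2) * ennreal (\<alpha> powr (- t / 2)) * wnorm \<Lambda> a 2 x = \<infinity>"
      proof -
        have c0: "ennreal (k powr (t/2)) * ennreal (\<alpha> powr (- t / 2)) \<noteq> 0"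
          using kpos assms(7) by (simp add: mult_eq_0_iff)
        have "wnorm \<Lambda> a 2 x = \<infinity>" unfolding RHS using True by (simp add: epowr_def)
        then show ?thesis unfolding EK using c0 by (simp add: ennreal_mult_top)
      qed
      then show ?thesis by (simp add: K_def)
    next
      case False
      define xx where "xx = enn2real X"
      have Xx: "X = ennreal xx" using False xx_def by (cases X) auto
      have xxnn: "xx \<ge> 0" using xx_def by simp
      have finF: "(\<Sum>j\<in>F. ennreal (r j powr 1 * \<bar>proj S x j\<bar> powr 1)) \<le> ennreal (sqrt (n * xx))"
        if F: "finite F" "F \<subseteq> \<Lambda>" for F
      proof -
        define u where "u j = r j * a j powr (-1) * I j" for j
        define v where "v j = a j * \<bar>x j\<bar>" for j
        have uv: "r j powr 1 * \<bar>proj S x j\<bar> powr 1 = u j * v j" if "j \<in> \<Lambda>" for j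
        proof -
          have "a j powr (-1) * a j = 1" using apos[OF that]
            by (simp add: powr_minus field_simps)
          then show ?thesis using inS[OF that] rpos[OF that] unfolding u_def v_def proj_def I_def
            by (auto simp: algebra_simps)
        qed
        have u2: "(u j)^2 = nt j" if "j \<in> \<Lambda>" for j
        proof -
          have "(a j powr (-1))^2 = a j powr (-2)" using apos[OF that]
            using powr_add[of "a j" "-1" "-1"] by (simp add: power2_eq_square)
          moreover have "(I j)^2 = I j" unfolding I_def by simp
          moreover have "(u j)^2 = (r j)^2 * (a j powr (-1))^2 * (I j)^2"
            unfolding u_def by (simp only: power_mult_distrib)
          ultimately have "(u j)^2 = (r j)^2 * a j powr (-2) * I j" by (simp only:)
          then show ?thesis unfolding nt_def by (simp only: mult_ac)
        qed
        have v2: "(v j)^2 = a j powr 2 * \<bar>x j\<bar> powr 2" if "j \<in> \<Lambda>" for j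
          using apos[OF that] unfolding v_def abs_powr2
          by (simp add: power_mult_distrib powr_numeral)
        have s1: "(\<Sum>j\<in>F. r j powr 1 * \<bar>proj S x j\<bar> powr 1) = (\<Sum>j\<in>F. u j * v j)"
          using F uv by (intro sum.cong) auto
        have s2: "(\<Sum>j\<in>F. (u j)^2) \<le> n"
        proof -
          have "(\<Sum>j\<in>F. (u j)^2) = sum nt F" using F u2 by (intro sum.cong) auto
          moreover have "ennreal (sum nt F) \<le> N" unfolding N_def
            using F ntnn by (intro ennreal_sum_le_infsum) auto
          ultimately show ?thesis using Nn npos by (simp add: ennreal_le_iff)
        qed
        have s3: "(\<Sum>j\<in>F. (v j)^2) \<le> xx"
        proof -
          have "(\<Sum>j\<in>F. (v j)^2) = (\<Sum>j\<in>F. a j powr 2 * \<bar>x j\<bar> powr 2)"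
            using F v2 by (intro sum.cong) auto
          moreover have "ennreal (\<Sum>j\<in>F. a j powr 2 * \<bar>x j\<bar> powr 2) \<le> X" unfolding X_def
            using F by (intro ennreal_sum_le_infsum) auto
          ultimately show ?thesis using Xx xxnn by (simp add: ennreal_le_iff)
        qed
        have "(\<Sum>j\<in>F. u j * v j)^2 \<le> (\<Sum>j\<in>F. (u j)^2) * (\<Sum>j\<in>F. (v j)^2)"
          by (rule Cauchy_Schwarz_ineq_sum)
        also have "\<dots> \<le> n * xx"
          using s2 s3 npos by (intro mult_mono) (auto intro: sum_nonneg)
        finally have "(\<Sum>j\<in>F. u j * v j) \<le> sqrt (n * xx)"
          using real_le_rsqrt by blast
        then have le: "(\<Sum>j\<in>F. r j powr 1 * \<bar>proj S x j\<bar> powr 1) \<le> sqrt (n * xx)"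
          using s1 by simp
        show ?thesis
        proof -
          have "(\<Sum>j\<in>F. ennreal (r j powr 1 * \<bar>proj S x j\<bar> powr 1))
              = ennreal (\<Sum>j\<in>F. r j powr 1 * \<bar>proj S x j\<bar> powr 1)"
            by (rule sum_ennreal) simp
          then show ?thesis using ennreal_leI[OF le] by simp
        qed
      qed
      have Lle: "L \<le> ennreal (sqrt (n * xx))"
        unfolding L_def ennreal_infsum_SUP using finF by (intro SUP_least) auto
      have "L < top" using Lle ennreal_less_top[of "sqrt (n * xx)"] by (rule le_less_trans)
      then have Lfin: "L \<noteq> \<infinity>" by (auto simp: infinity_ennreal_def)
      have EL: "epowr L 1 = L" using Lfin unfolding epowr_def
        by (cases L) auto
      have "n powr (1/2) \<le> k powr (t/2) * \<alpha> powr (- t / 2)"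
      proof -
        have "(\<alpha> * n powr (1/t)) powr (t/2) \<le> k powr (t/2)"
          using akn assms(4,7) npos by (intro powr_mono2) auto
        moreover have "(\<alpha> * n powr (1/t)) powr (t/2) = \<alpha> powr (t/2) * n powr (1/2)"
          using assms(4,7) npos by (simp add: powr_mult powr_powr)
        ultimately have "\<alpha> powr (t/2) * n powr (1/2) \<le> k powr (t/2)" by simp
        then have "n powr (1/2) \<le> k powr (t/2) / \<alpha> powr (t/2)"
          using assms(7) by (simp add: field_simps)
        moreover have "\<alpha> powr (- t / 2) = inverse (\<alpha> powr (t/2))"
          using powr_minus[of \<alpha> "t/2"] by (simp only: minus_divide_left)
        ultimately show ?thesis by (simp only: divide_inverse)
      qed
      then have "sqrt (n * xx) \<le> k powr (t/2) * \<alpha> powr (- t / 2) * xx powr (1/2)"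
      proof -
        have "sqrt (n * xx) = n powr (1/2) * xx powr (1/2)"
          using npos xxnn by (simp add: real_sqrt_mult powr_half_sqrt)
        then show ?thesis using \<open>n powr (1/2) \<le> k powr (t/2) * \<alpha> powr (- t / 2)\<close>
          by (metis mult_right_mono powr_ge_zero)
      qed
      then have "L \<le> ennreal (k powr (t/2) * \<alpha> powr (- t / 2) * xx powr (1/2))"
        using Lle by (meson ennreal_leI order_trans)
      also have "\<dots> = epowr K (t/2) * ennreal (\<alpha> powr (- t / 2)) * wnorm \<Lambda> a 2 x"
        unfolding EK RHS Xx epowr_def using xxnn Kfin by (simp add: ennreal_mult k_def)
      finally show ?thesis using LHS EL unfolding S_def by (simp add: K_def)
    qed
  qed
qed

end
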